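(* Let $n \in\mathbb N$ and $F\colon\mathbb R_+^n \to \mathbb R_+$. If $F$ is amenable and there exists $c>0$ such that $F(\mathbf a)\in [c,2c]$ for all $\mathbf a \in\mathbb R_+^n \setminus \{(0,\dots,0)\}$, then $F\in P_{BM}^n$.
   Context: $\mathbb R_+=[0,\infty)$. $F$ is amenable if $F(\mathbf x)=0\iff\mathbf x=(0,\dots,0)$. A b-metric on $X$ is $d\colon X^2\to\mathbb R_+$ with $d(x,y)=0\iff x=y$, $d(x,y)=d(y,x)$, and for some $K\geqslant1$, $d(x,z)\leqslant K(d(x,y)+d(y,z))$ for all $x,y,z$; a metric is a b-metric with $K=1$. $P^n_{BM}$ is the set of $F\colon\mathbb R_+^n\to\mathbb R_+$ such that for every collection of b-metric spaces $(X_i,d_i)$, $i=1,\dots,n$ (arbitrary constants), the function $D(\mathbf x,\mathbf y)=F(d_1(x_1,y_1),\dots,d_n(x_n,y_n))$ on $\prod_{i=1}^nX_i$ is a metric. *)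

theory Defs
  imports Main "HOL.Real"
begin

text \<open>Points of R_+^n are represented as real lists of length n with nonnegative entries.\<close>
definition Rplus_vec :: "nat \<Rightarrow> real list set" where
  "Rplus_vec n = {a. length a = n \<and> (\<forall>x\<in>set a. 0 \<le> x)}"

definition bmetric_with :: "'a set \<Rightarrow> ('a \<Rightarrow> 'a \<Rightarrow> real) \<Rightarrow> real \<Rightarrow> bool" where
  "bmetric_with X d K \<longleftrightarrow>
     1 \<le> K \<and>
     (\<forall>x\<in>X. \<forall>y\<in>X. 0 \<le> d x y \<and> (d x y = 0 \<longleftrightarrow> x = y) \<and> d x y = d y x) \<and>
     (\<forall>x\<in>X. \<forall>y\<in>X. \<forall>z\<in>X. d x z \<le> K * (d x y + d y z))"

definition bmetric_on :: "'a set \<Rightarrow> ('a \<Rightarrow> 'a \<Rightarrow> real) \<Rightarrow> bool" where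
  "bmetric_on X d \<longleftrightarrow> (\<exists>K. bmetric_with X d K)"

definition metric_on :: "'a set \<Rightarrow> ('a \<Rightarrow> 'a \<Rightarrow> real) \<Rightarrow> bool" where
  "metric_on X d \<longleftrightarrow> bmetric_with X d 1"

definition amenable :: "nat \<Rightarrow> (real list \<Rightarrow> real) \<Rightarrow> bool" where
  "amenable n F \<longleftrightarrow> (\<forall>a\<in>Rplus_vec n. F a = 0 \<longleftrightarrow> a = replicate n 0)"

definition prod_space :: "nat \<Rightarrow> (nat \<Rightarrow> 'a set) \<Rightarrow> 'a list set" where
  "prod_space n X = {x. length x = n \<and> (\<forall>i<n. x ! i \<in> X i)}"

definition induced_fun :: "nat \<Rightarrow> (real list \<Rightarrow> real) \<Rightarrow> (nat \<Rightarrow> 'a \<Rightarrow> 'a \<Rightarrow> real)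
    \<Rightarrow> 'a list \<Rightarrow> 'a list \<Rightarrow> real" where
  "induced_fun n F d x y = F (map (\<lambda>i. d i (x ! i) (y ! i)) [0..<n])"

text \<open>P^n_BM, relative to the ambient type 'a of the points (the theorem quantifies over all types).\<close>
definition P_BM :: "'a itself \<Rightarrow> nat \<Rightarrow> (real list \<Rightarrow> real) \<Rightarrow> bool" where
  "P_BM _ n F \<longleftrightarrow>
     (\<forall>a\<in>Rplus_vec n. 0 \<le> F a) \<and>
     (\<forall>(X :: nat \<Rightarrow> 'a set) (d :: nat \<Rightarrow> 'a \<Rightarrow> 'a \<Rightarrow> real).
        (\<forall>i<n. bmetric_on (X i) (d i)) \<longrightarrow>
        metric_on (prod_space n X) (induced_fun n F d))"

end

theory Submission
  imports Defs
begin

lemma vec_in: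
  assumes "\<forall>i<n. bmetric_on (X i) (d i)" "x \<in> prod_space n X" "y \<in> prod_space n X"
  shows "map (\<lambda>i. d i (x ! i) (y ! i)) [0..<n] \<in> Rplus_vec n"
  using assms unfolding Rplus_vec_def prod_space_def bmetric_on_def bmetric_with_def
  by auto

lemma vec_zero:
  assumes "\<forall>i<n. bmetric_on (X i) (d i)" "x \<in> prod_space n X" "y \<in> prod_space n X"
  shows "map (\<lambda>i. d i (x ! i) (y ! i)) [0..<n] = replicate n 0 \<longleftrightarrow> x = y"
proof -
  have "map (\<lambda>i. d i (x ! i) (y ! i)) [0..<n] = replicate n 0 \<longleftrightarrow> (\<forall>i<n. d i (x ! i) (y ! i) = 0)"
    by (auto simp: list_eq_iff_nth_eq)
  also have "\<dots> \<longleftrightarrow> (\<forall>i<n. x ! i = y ! i)"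
  proof -
    have "d i (x ! i) (y ! i) = 0 \<longleftrightarrow> x ! i = y ! i" if hi: "i < n" for i
    proof -
      obtain K where "bmetric_with (X i) (d i) K" using assms(1) hi unfolding bmetric_on_def by blast
      moreover have "x ! i \<in> X i" "y ! i \<in> X i" using assms(2,3) hi unfolding prod_space_def by auto
      ultimately show ?thesis unfolding bmetric_with_def by blast
    qed
    then show ?thesis by blast
  qed
  also have "\<dots> \<longleftrightarrow> x = y"
    using assms unfolding prod_space_def by (auto simp: list_eq_iff_nth_eq)
  finally show ?thesis .
qed

lemma vec_sym:
  assumes "\<forall>i<n. bmetric_on (X i) (d i)" "x \<in> prod_space n X" "y \<in> prod_space n X"
  shows "map (\<lambda>i. d i (x ! i) (y ! i)) [0..<n] = map (\<lambda>i. d i (y ! i) (x ! i)) [0..<n]"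
  using assms unfolding prod_space_def bmetric_on_def bmetric_with_def by auto

theorem corollary3p2:
  fixes n :: nat and F :: "real list \<Rightarrow> real"
  assumes "\<forall>a\<in>Rplus_vec n. 0 \<le> F a"
    and "amenable n F"
    and "\<exists>c>0. \<forall>a\<in>Rplus_vec n. a \<noteq> replicate n 0 \<longrightarrow> c \<le> F a \<and> F a \<le> 2 * c"
  shows "P_BM TYPE('a) n F"
proof -
  obtain c where c: "c > 0" "\<forall>a\<in>Rplus_vec n. a \<noteq> replicate n 0 \<longrightarrow> c \<le> F a \<and> F a \<le> 2 * c"
    using assms(3) by blast
  have "metric_on (prod_space n X) (induced_fun n F d)"
    if h: "\<forall>i<n. bmetric_on (X i) (d i)" for X :: "nat \<Rightarrow> 'a set" and d
  proof -
    let ?D = "induced_fun n F d"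
    have nn: "0 \<le> ?D x y" if "x \<in> prod_space n X" "y \<in> prod_space n X" for x y
      using assms(1) vec_in[OF h that] unfolding induced_fun_def by blast
    have z: "?D x y = 0 \<longleftrightarrow> x = y" if "x \<in> prod_space n X" "y \<in> prod_space n X" for x y
      using assms(2) vec_in[OF h that] vec_zero[OF h that] unfolding induced_fun_def amenable_def
      by blast
    have bnd: "c \<le> ?D x y \<and> ?D x y \<le> 2 * c" if "x \<in> prod_space n X" "y \<in> prod_space n X" "x \<noteq> y" for x y
      using c(2) vec_in[OF h that(1,2)] vec_zero[OF h that(1,2)] that(3) unfolding induced_fun_def
      by blast
    have s: "?D x y = ?D y x" if "x \<in> prod_space n X" "y \<in> prod_space n X" for x y
      unfolding induced_fun_def by (subst vec_sym[OF h that]) (rule refl)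
    have t: "?D x z \<le> ?D x y + ?D y z"
      if "x \<in> prod_space n X" "y \<in> prod_space n X" "z \<in> prod_space n X" for x y z
    proof (cases "x = z")
      case True then show ?thesis using nn[OF that(1,2)] nn[OF that(2,3)] z[OF that(1,3)] by simp
    next
      case False
      show ?thesis
      proof (cases "y = x")
        case True then show ?thesis using z[OF that(1,2)] by simp
      next
        case yx: False
        show ?thesis
        proof (cases "y = z")
          case True then show ?thesis using z[OF that(2,3)] by simp
        next
          case False
          have "?D x z \<le> 2 * c" using bnd[OF that(1,3) \<open>x \<noteq> z\<close>] by blast
          moreover have "c \<le> ?D x y" using bnd[OF that(1,2)] yx by metis
          moreover have "c \<le> ?D y z" using bnd[OF that(2,3) False] by blast
          ultimately show ?thesis by linarith
        qed
      qed
    qed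
    show ?thesis unfolding metric_on_def bmetric_with_def
      using nn z s t by auto
  qed
  then show ?thesis unfolding P_BM_def using assms(1) by blast
qed

end
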